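(* Let $(X,\overline p)$ be a perverse CS set with singular set $\Sigma$. For every point $x\in X$ there exists a path $\beta\colon[0,1]\to X$ with $\beta(0)=x$ and $\beta(]0,1])\subseteq X\setminus\Sigma$. Consequently, the map $\pi_0(X\setminus\Sigma)\to\pi_0^{\overline p}(X)$ is surjective; this map sends the component of a regular point $y$ to the component of the $0$-simplex $y$ in $\mathscr G_{\overline p}X$.
   Context: Filtered spaces. A filtered space of formal dimension $n$ is a nonempty space $X$ with closed subsets $\emptyset=X_{-1}\subseteq\cdots\subseteq X_{n-1}\subsetneq X_n=X$. Strata are the nonempty connected components of $X_i\setminus X_{i-1}$, with codimension $n-i$. The singular set is $\Sigma=X_{n-1}$; points of $X\setminus\Sigma$ are regular. CS sets. A CS set is a filtered space satisfying: - each $X_i\setminus X_{i-1}$ is an $i$-manifold; - each $x\in X_i\setminus X_{i-1}$ with $i\ne n$ has an open neighborhood $V$ and a stratified homeomorphism $\varphi\colon U\times\mathring cL\to V$ with $\varphi(u,\mathtt v)=u$ and $\varphi(U\times\mathring cL_j)=V\cap X_{i+j+1}$. Here $U$ is an open neighborhood of $x$ in $X_i\setminus X_{i-1}$, $L$ is a nonempty compact filtered space of formal dimension $n-i-1$, and $\mathring cL=L\times[0,1[/L\times0$ has apex $\mathtt v$ and filtration $\mathring cL_{i-1}$ in degree $i$. A stratified homeomorphism is a homeomorphism which, with its inverse, sends each stratum into a stratum of no larger codimension. Perversities. A perversity is a map $\overline p$ from strata to $\mathbb Z\cup\{\pm\infty\}$ vanishing on regular strata. Full simplices and the Gajer space.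 A simplex $\sigma\colon\Delta^j\to X$ is $\overline p$-allowable if $\dim\sigma^{-1}S\le j-\operatorname{codim}S+\overline p(S)$ for all singular strata $S$. Here $\dim$ is polyhedral dimension, with $\dim\emptyset=-\infty$. A simplex is $\overline p$-full if it and all its iterated faces are allowable. $\mathscr G_{\overline p}X\subseteq\mathrm{Sing}\,X$ is the simplicial set of full simplices, and $\pi_0^{\overline p}(X)=\pi_0(\mathscr G_{\overline p}X)$. Every regular point, as a $0$-simplex, is $\overline p$-full. *)

theory Defs
  imports "HOL-Analysis.Analysis" "HOL-Homology.Homology"
begin

text \<open>Only the values F i for -1 \<le> i \<le> n are relevant.\<close>

definition filtered_space :: "'a topology \<Rightarrow> int \<Rightarrow> (int \<Rightarrow> 'a set) \<Rightarrow> bool" where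
  "filtered_space X n F \<longleftrightarrow>
     topspace X \<noteq> {} \<and> 0 \<le> n \<and> F (-1) = {} \<and> F n = topspace X \<and>
     (\<forall>i. -1 \<le> i \<and> i \<le> n \<longrightarrow> closedin X (F i)) \<and>
     (\<forall>i. -1 \<le> i \<and> i < n \<longrightarrow> F i \<subseteq> F (i + 1)) \<and>
     F (n - 1) \<noteq> F n"

definition strata_deg :: "'a topology \<Rightarrow> (int \<Rightarrow> 'a set) \<Rightarrow> int \<Rightarrow> 'a set set" where
  "strata_deg X F i = connected_components_of (subtopology X (F i - F (i - 1)))"

definition strata :: "'a topology \<Rightarrow> int \<Rightarrow> (int \<Rightarrow> 'a set) \<Rightarrow> 'a set set" where
  "strata X n F = (\<Union>i\<in>{0..n}. strata_deg X F i)"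

definition stratum_deg :: "'a topology \<Rightarrow> int \<Rightarrow> (int \<Rightarrow> 'a set) \<Rightarrow> 'a set \<Rightarrow> int" where
  "stratum_deg X n F S = (THE i. 0 \<le> i \<and> i \<le> n \<and> S \<in> strata_deg X F i)"

definition codim :: "'a topology \<Rightarrow> int \<Rightarrow> (int \<Rightarrow> 'a set) \<Rightarrow> 'a set \<Rightarrow> int" where
  "codim X n F S = n - stratum_deg X n F S"

definition stratum_preserving ::
  "'a topology \<Rightarrow> int \<Rightarrow> (int \<Rightarrow> 'a set) \<Rightarrow> 'b topology \<Rightarrow> int \<Rightarrow> (int \<Rightarrow> 'b set)
     \<Rightarrow> ('a \<Rightarrow> 'b) \<Rightarrow> bool" where
  "stratum_preserving X n F Y m G f \<longleftrightarrow>
     (\<forall>S\<in>strata X n F. \<exists>S'\<in>strata Y m G. f ` S \<subseteq> S' \<and> codim Y m G S' \<le> codim X n F S)"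

definition stratified_homeomorphism ::
  "'a topology \<Rightarrow> int \<Rightarrow> (int \<Rightarrow> 'a set) \<Rightarrow> 'b topology \<Rightarrow> int \<Rightarrow> (int \<Rightarrow> 'b set)
     \<Rightarrow> ('a \<Rightarrow> 'b) \<Rightarrow> bool" where
  "stratified_homeomorphism X n F Y m G f \<longleftrightarrow>
     (\<exists>g. homeomorphic_maps X Y f g \<and> stratum_preserving X n F Y m G f \<and>
          stratum_preserving Y m G X n F g)"

text \<open>Points of the open cone on L: None is the apex, Some (l,t) with 0<t<1 the class of (l,t).\<close>

definition cone_quot :: "'b \<times> real \<Rightarrow> ('b \<times> real) option" where
  "cone_quot p = (if snd p = 0 then None else Some p)"

definition cone_base :: "'b topology \<Rightarrow> ('b \<times> real) topology" where
  "cone_base L = prod_topology L (subtopology euclideanreal {0..<1})"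

definition cone_top :: "'b topology \<Rightarrow> ('b \<times> real) option topology" where
  "cone_top L = topology (\<lambda>U. U \<subseteq> cone_quot ` topspace (cone_base L) \<and>
                   openin (cone_base L) {p \<in> topspace (cone_base L). cone_quot p \<in> U})"

text \<open>The filtration of the open cone: degree k piece is the open cone on L_(k-1),
  where the cone on the empty set is the apex.\<close>

definition cone_filt :: "(int \<Rightarrow> 'b set) \<Rightarrow> int \<Rightarrow> ('b \<times> real) option set" where
  "cone_filt G k = (if k < 0 then {} else insert None (Some ` (G (k - 1) \<times> {0<..<1})))"

definition is_manifold :: "'a topology \<Rightarrow> nat \<Rightarrow> bool" where
  "is_manifold M d \<longleftrightarrow> Hausdorff_space M \<and>
     (\<forall>x\<in>topspace M. \<exists>W E. openin M W \<and> x \<in> W \<and> openin (Euclidean_space d) E \<and>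
        subtopology M W homeomorphic_space subtopology (Euclidean_space d) E)"

text \<open>CS set, with links taken in the type 'b (the theorem is stated for arbitrary 'b,
  which is equivalent to allowing links of arbitrary type).\<close>

definition CS_set :: "'b itself \<Rightarrow> 'a topology \<Rightarrow> int \<Rightarrow> (int \<Rightarrow> 'a set) \<Rightarrow> bool" where
  "CS_set (_ :: 'b itself) X n F \<longleftrightarrow>
     filtered_space X n F \<and>
     (\<forall>i. 0 \<le> i \<and> i \<le> n \<longrightarrow> is_manifold (subtopology X (F i - F (i - 1))) (nat i)) \<and>
     (\<forall>i x. 0 \<le> i \<and> i < n \<and> x \<in> F i - F (i - 1) \<longrightarrow>
        (\<exists>U V (L :: 'b topology) G (\<phi> :: 'a \<times> ('b \<times> real) option \<Rightarrow> 'a).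
           openin (subtopology X (F i - F (i - 1))) U \<and> x \<in> U \<and>
           openin X V \<and> x \<in> V \<and>
           filtered_space L (n - i - 1) G \<and> compact_space L \<and>
           stratified_homeomorphism
             (prod_topology (subtopology X U) (cone_top L)) n (\<lambda>k. U \<times> cone_filt G (k - i))
             (subtopology X V) n (\<lambda>k. V \<inter> F k) \<phi> \<and>
           (\<forall>u\<in>U. \<phi> (u, None) = u) \<and>
           (\<forall>j. -1 \<le> j \<and> j \<le> n - i - 1 \<longrightarrow>
              \<phi> ` (U \<times> cone_filt G (j + 1)) = V \<inter> F (i + j + 1))))"

definition perversity :: "'a topology \<Rightarrow> int \<Rightarrow> (int \<Rightarrow> 'a set) \<Rightarrow> ('a set \<Rightarrow> ereal) \<Rightarrow> bool" where
  "perversity X n F p \<longleftrightarrow>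
     (\<forall>S\<in>strata X n F. (p S = \<infinity> \<or> p S = -\<infinity> \<or> (\<exists>k::int. p S = ereal (of_int k))) \<and>
                        (codim X n F S = 0 \<longrightarrow> p S = 0))"

definition aff_simplex :: "nat \<Rightarrow> (nat \<Rightarrow> nat \<Rightarrow> real) \<Rightarrow> (nat \<Rightarrow> real) set" where
  "aff_simplex l v = (\<lambda>t. \<lambda>i. \<Sum>k\<le>l. t k * v k i) ` standard_simplex l"

text \<open>A is contained in a compact polyhedron of dimension at most l inside the j-simplex
  (a finite union of affine l-simplices, possibly degenerate).\<close>

definition in_polyhedron_dim :: "nat \<Rightarrow> (nat \<Rightarrow> real) set \<Rightarrow> nat \<Rightarrow> bool" where
  "in_polyhedron_dim j A l \<longleftrightarrow>
     (\<exists>Vs. finite Vs \<and> (\<forall>v\<in>Vs. \<forall>k\<le>l. v k \<in> standard_simplex j) \<and> A \<subseteq> (\<Union>v\<in>Vs. aff_simplex l v))"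

definition polydim :: "nat \<Rightarrow> (nat \<Rightarrow> real) set \<Rightarrow> ereal" where
  "polydim j A = (if A = {} then -\<infinity> else Inf {ereal (real l) | l. in_polyhedron_dim j A l})"

definition allowable ::
  "'a topology \<Rightarrow> int \<Rightarrow> (int \<Rightarrow> 'a set) \<Rightarrow> ('a set \<Rightarrow> ereal) \<Rightarrow> nat \<Rightarrow> ((nat \<Rightarrow> real) \<Rightarrow> 'a) \<Rightarrow> bool" where
  "allowable X n F p j \<sigma> \<longleftrightarrow> singular_simplex j X \<sigma> \<and>
     (\<forall>S\<in>strata X n F. codim X n F S > 0 \<longrightarrow>
        polydim j {t \<in> standard_simplex j. \<sigma> t \<in> S}
          \<le> ereal (of_int (int j - codim X n F S)) + p S)"

fun full ::
  "'a topology \<Rightarrow> int \<Rightarrow> (int \<Rightarrow> 'a set) \<Rightarrow> ('a set \<Rightarrow> ereal) \<Rightarrow> nat \<Rightarrow> ((nat \<Rightarrow> real) \<Rightarrow> 'a) \<Rightarrow> bool" where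
  "full X n F p 0 \<sigma> = allowable X n F p 0 \<sigma>"
| "full X n F p (Suc j) \<sigma> = (allowable X n F p (Suc j) \<sigma> \<and>
     (\<forall>k\<le>Suc j. full X n F p j (singular_face (Suc j) k \<sigma>)))"

definition vertex :: "'a \<Rightarrow> (nat \<Rightarrow> real) \<Rightarrow> 'a" where
  "vertex y = restrict (\<lambda>_. y) (standard_simplex 0)"

text \<open>Elementary relation between vertices of the Gajer simplicial set: the two faces of a
  full 1-simplex; pi_0 is the quotient of the full 0-simplices by the generated equivalence.\<close>

definition gajer_edge ::
  "'a topology \<Rightarrow> int \<Rightarrow> (int \<Rightarrow> 'a set) \<Rightarrow> ('a set \<Rightarrow> ereal)
     \<Rightarrow> ((nat \<Rightarrow> real) \<Rightarrow> 'a) \<Rightarrow> ((nat \<Rightarrow> real) \<Rightarrow> 'a) \<Rightarrow> bool" where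
  "gajer_edge X n F p a b \<longleftrightarrow>
     (\<exists>\<omega>. full X n F p 1 \<omega> \<and> a = singular_face 1 1 \<omega> \<and> b = singular_face 1 0 \<omega>)"

definition gajer_conn ::
  "'a topology \<Rightarrow> int \<Rightarrow> (int \<Rightarrow> 'a set) \<Rightarrow> ('a set \<Rightarrow> ereal)
     \<Rightarrow> ((nat \<Rightarrow> real) \<Rightarrow> 'a) \<Rightarrow> ((nat \<Rightarrow> real) \<Rightarrow> 'a) \<Rightarrow> bool" where
  "gajer_conn X n F p = (\<lambda>a b. gajer_edge X n F p a b \<or> gajer_edge X n F p b a)\<^sup>*\<^sup>*"

definition gajer_class ::
  "'a topology \<Rightarrow> int \<Rightarrow> (int \<Rightarrow> 'a set) \<Rightarrow> ('a set \<Rightarrow> ereal)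
     \<Rightarrow> ((nat \<Rightarrow> real) \<Rightarrow> 'a) \<Rightarrow> ((nat \<Rightarrow> real) \<Rightarrow> 'a) set" where
  "gajer_class X n F p a = {b. full X n F p 0 b \<and> gajer_conn X n F p a b}"

definition gajer_pi0 ::
  "'a topology \<Rightarrow> int \<Rightarrow> (int \<Rightarrow> 'a set) \<Rightarrow> ('a set \<Rightarrow> ereal) \<Rightarrow> ((nat \<Rightarrow> real) \<Rightarrow> 'a) set set" where
  "gajer_pi0 X n F p = gajer_class X n F p ` {a. full X n F p 0 a}"

definition regular_pi0 :: "'a topology \<Rightarrow> int \<Rightarrow> (int \<Rightarrow> 'a set) \<Rightarrow> 'a set set" where
  "regular_pi0 X n F = path_components_of (subtopology X (topspace X - F (n - 1)))"

definition pi0_map ::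
  "'a topology \<Rightarrow> int \<Rightarrow> (int \<Rightarrow> 'a set) \<Rightarrow> ('a set \<Rightarrow> ereal) \<Rightarrow> 'a set
     \<Rightarrow> ((nat \<Rightarrow> real) \<Rightarrow> 'a) set" where
  "pi0_map X n F p C = gajer_class X n F p (vertex (SOME y. y \<in> C))"

end

theory Submission
  imports Defs
begin

lemma cone_istop:
  "istopology (\<lambda>U. U \<subseteq> cone_quot ` topspace (cone_base L) \<and>
                   openin (cone_base L) {p \<in> topspace (cone_base L). cone_quot p \<in> U})"
  unfolding istopology_def
proof (rule conjI; intro allI impI)
  fix S T assume a: "S \<subseteq> cone_quot ` topspace (cone_base L) \<and> openin (cone_base L) {p \<in> topspace (cone_base L). cone_quot p \<in> S}"
    "T \<subseteq> cone_quot ` topspace (cone_base L) \<and> openin (cone_base L) {p \<in> topspace (cone_base L). cone_quot p \<in> T}"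
  have e: "{p \<in> topspace (cone_base L). cone_quot p \<in> S \<inter> T} = {p \<in> topspace (cone_base L). cone_quot p \<in> S} \<inter> {p \<in> topspace (cone_base L). cone_quot p \<in> T}"
    by auto
  show "S \<inter> T \<subseteq> cone_quot ` topspace (cone_base L) \<and> openin (cone_base L) {p \<in> topspace (cone_base L). cone_quot p \<in> S \<inter> T}"
    unfolding e using a by auto
next
  fix K assume K: "\<forall>U\<in>K. U \<subseteq> cone_quot ` topspace (cone_base L) \<and> openin (cone_base L) {p \<in> topspace (cone_base L). cone_quot p \<in> U}"
  have e: "{p \<in> topspace (cone_base L). cone_quot p \<in> \<Union>K} = (\<Union>U\<in>K. {p \<in> topspace (cone_base L). cone_quot p \<in> U})"
    by auto
  show "\<Union>K \<subseteq> cone_quot ` topspace (cone_base L) \<and> openin (cone_base L) {p \<in> topspace (cone_base L). cone_quot p \<in> \<Union>K}"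
  proof
    show "\<Union>K \<subseteq> cone_quot ` topspace (cone_base L)" using K by blast
    show "openin (cone_base L) {p \<in> topspace (cone_base L). cone_quot p \<in> \<Union>K}"
      unfolding e by (rule openin_Union) (use K in blast)
  qed
qed

lemma openin_cone_top: "openin (cone_top L) U \<longleftrightarrow> U \<subseteq> cone_quot ` topspace (cone_base L) \<and>
                   openin (cone_base L) {p \<in> topspace (cone_base L). cone_quot p \<in> U}"
  unfolding cone_top_def by (simp only: topology_inverse'[OF cone_istop])

lemma topspace_cone_top: "topspace (cone_top L) = cone_quot ` topspace (cone_base L)"
proof (rule subset_antisym)
  show "topspace (cone_top L) \<subseteq> cone_quot ` topspace (cone_base L)"
    using openin_topspace[of "cone_top L"] by (subst (asm) openin_cone_top) (erule conjunct1)
  have e: "{p \<in> topspace (cone_base L). cone_quot p \<in> cone_quot ` topspace (cone_base L)} = topspace (cone_base L)"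
    by blast
  have "openin (cone_top L) (cone_quot ` topspace (cone_base L))"
    unfolding openin_cone_top e by simp
  then show "cone_quot ` topspace (cone_base L) \<subseteq> topspace (cone_top L)"
    by (rule openin_subset)
qed

lemma continuous_cone_quot: "continuous_map (cone_base L) (cone_top L) cone_quot"
  unfolding continuous_map_def topspace_cone_top
proof (intro conjI allI impI)
  show "cone_quot \<in> topspace (cone_base L) \<rightarrow> cone_quot ` topspace (cone_base L)" by blast
  fix U assume "openin (cone_top L) U"
  then show "openin (cone_base L) {x \<in> topspace (cone_base L). cone_quot x \<in> U}"
    by (subst (asm) openin_cone_top) (erule conjunct2)
qed

lemma topspace_cone_base: "topspace (cone_base L) = topspace L \<times> {0..<1}"
  by (simp add: cone_base_def)


lemma filt_mono_aux:
  assumes "filtered_space X n F" "-1 \<le> a"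
  shows "a + int k \<le> n \<Longrightarrow> F a \<subseteq> F (a + int k)"
proof (induction k)
  case 0 then show ?case by simp
next
  case (Suc k)
  have eq: "a + int (Suc k) = (a + int k) + 1" by simp
  from assms(1) have m: "\<forall>i. -1 \<le> i \<and> i < n \<longrightarrow> F i \<subseteq> F (i + 1)"
    by (simp add: filtered_space_def)
  have "F (a + int k) \<subseteq> F (a + int k + 1)"
    using m assms(2) Suc.prems by simp
  moreover have "F a \<subseteq> F (a + int k)" using Suc.IH Suc.prems by simp
  ultimately show ?case unfolding eq by blast
qed

lemma filt_mono:
  assumes "filtered_space X n F" "-1 \<le> a" "a \<le> b" "b \<le> n"
  shows "F a \<subseteq> F b"
proof -
  have "b = a + int (nat (b - a))" using assms by simp
  then show ?thesis using filt_mono_aux[OF assms(1,2), of "nat (b - a)"] assms by simp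
qed

lemma filt_top:
  assumes "filtered_space X n F" "-1 \<le> a" "a \<le> n"
  shows "F a \<subseteq> topspace X"
proof -
  have "closedin X (F a)" using assms unfolding filtered_space_def by blast
  then show ?thesis by (rule closedin_subset)
qed

lemma sing_stratum:
  assumes FS: "filtered_space X n F" and S: "S \<in> strata X n F" and c: "0 < codim X n F S"
  shows "S \<subseteq> F (n - 1)"
proof -
  obtain i where i: "0 \<le> i" "i \<le> n" "S \<in> strata_deg X F i"
    using S unfolding strata_def by auto
  have "S \<subseteq> topspace (subtopology X (F i - F (i - 1)))"
    using i(3) unfolding strata_deg_def by (rule connected_components_of_subset)
  then have Ssub: "S \<subseteq> F i - F (i - 1)" by simp
  have Sne: "S \<noteq> {}"
    using i(3) unfolding strata_deg_def by (rule nonempty_connected_components_of)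
  have low: "S \<subseteq> F (n - 1)" if "0 \<le> i'" "i' < n" "S \<in> strata_deg X F i'" for i'
  proof -
    have "S \<subseteq> topspace (subtopology X (F i' - F (i' - 1)))"
      using that(3) unfolding strata_deg_def by (rule connected_components_of_subset)
    then have "S \<subseteq> F i'" by auto
    also have "F i' \<subseteq> F (n - 1)" using filt_mono[OF FS, of i' "n - 1"] that by simp
    finally show ?thesis .
  qed
  show ?thesis
  proof (cases "i < n")
    case True then show ?thesis using low i by blast
  next
    case False
    then have "i = n" using i by simp
    have "stratum_deg X n F S = n"
      unfolding stratum_deg_def
    proof (rule the_equality)
      show "0 \<le> n \<and> n \<le> n \<and> S \<in> strata_deg X F n" using i \<open>i = n\<close> by simp
      fix i' assume "0 \<le> i' \<and> i' \<le> n \<and> S \<in> strata_deg X F i'"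
      then show "i' = n"
        using low[of i'] Ssub Sne \<open>i = n\<close> by (cases "i' < n") auto
    qed
    then show ?thesis using c unfolding codim_def by simp
  qed
qed

lemma allowable_reg:
  assumes FS: "filtered_space X n F" and ss: "singular_simplex j X \<sigma>"
    and reg: "\<And>t. t \<in> standard_simplex j \<Longrightarrow> \<sigma> t \<notin> F (n - 1)"
  shows "allowable X n F p j \<sigma>"
  unfolding allowable_def
proof (intro conjI ballI impI ss)
  fix S assume "S \<in> strata X n F" "0 < codim X n F S"
  then have "S \<subseteq> F (n - 1)" using sing_stratum[OF FS] by blast
  then have "{t \<in> standard_simplex j. \<sigma> t \<in> S} = {}" using reg by blast
  then show "polydim j {t \<in> standard_simplex j. \<sigma> t \<in> S} \<le> ereal (of_int (int j - codim X n F S)) + p S"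
    by (simp add: polydim_def)
qed

lemma polydim_single:
  assumes "v \<in> standard_simplex j"
  shows "polydim j {v} = 0"
proof -
  have aff: "aff_simplex 0 (\<lambda>k. v) = {v}"
    by (auto simp: aff_simplex_def standard_simplex_0)
  have "in_polyhedron_dim j {v} 0"
    unfolding in_polyhedron_dim_def
    by (rule exI[of _ "{\<lambda>k. v}"]) (use assms aff in auto)
  then have 1: "0 \<in> {ereal (real l) | l. in_polyhedron_dim j {v} l}" by force
  have "Inf {ereal (real l) | l. in_polyhedron_dim j {v} l} = 0"
  proof (rule antisym)
    show "Inf {ereal (real l) | l. in_polyhedron_dim j {v} l} \<le> 0" using 1 by (rule Inf_lower)
    show "0 \<le> Inf {ereal (real l) | l. in_polyhedron_dim j {v} l}" by (rule Inf_greatest) auto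
  qed
  then show ?thesis by (simp add: polydim_def)
qed

lemma vertex_simplex:
  assumes "y \<in> topspace X"
  shows "singular_simplex 0 X (vertex y)"
  unfolding singular_simplex_def vertex_def
proof
  show "continuous_map (subtopology (powertop_real UNIV) (standard_simplex 0)) X (restrict (\<lambda>_. y) (standard_simplex 0))"
    by (rule continuous_map_eq[of _ _ "\<lambda>_. y"]) (use assms in auto)
qed simp

lemma vertex_regular_allowable:
  assumes FS: "filtered_space X n F" and "y \<in> topspace X" "y \<notin> F (n - 1)"
  shows "allowable X n F p 0 (vertex y)"
  by (rule allowable_reg[OF FS vertex_simplex]) (use assms in \<open>auto simp: vertex_def\<close>)

definition psimp :: "(real \<Rightarrow> 'a) \<Rightarrow> (nat \<Rightarrow> real) \<Rightarrow> 'a" where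
  "psimp g = restrict (g \<circ> (\<lambda>x. x 0)) (standard_simplex 1)"

lemma psimp_simplex:
  assumes g: "pathin X g"
  shows "singular_simplex 1 X (psimp g)"
proof -
  have contg: "continuous_map (subtopology euclideanreal {0..1}) X g"
    using g by (simp add: pathin_def)
  have "continuous_map (subtopology (powertop_real UNIV) (standard_simplex (Suc 0)))
                         euclideanreal (\<lambda>x. x 0)"
      by (metis (mono_tags) UNIV_I continuous_map_from_subtopology continuous_map_product_projection)
  then have "continuous_map (subtopology (powertop_real UNIV) (standard_simplex (Suc 0)))
                              (top_of_set {0..1}) (\<lambda>x. x 0)"
      by (auto simp: continuous_map_in_subtopology standard_simplex_def)
  then have "continuous_map (subtopology (powertop_real UNIV) (standard_simplex 1)) X (g \<circ> (\<lambda>x. x 0))"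
    using contg continuous_map_compose by fastforce
  then show ?thesis
    unfolding singular_simplex_def psimp_def
    by (auto intro: continuous_map_eq)
qed

lemma psimp_face0: "singular_face 1 0 (psimp g) = vertex (g 0)"
proof -
  have e: "simplical_face 0 (\<lambda>j. if j = 0 then (1::real) else 0) = (\<lambda>j. if j = Suc 0 then 1 else 0)"
    by (auto simp: simplical_face_def)
  show ?thesis
  by (rule ext) (auto simp: e singular_face_def psimp_def vertex_def standard_simplex_0)
qed

lemma psimp_face1: "singular_face 1 1 (psimp g) = vertex (g 1)"
proof -
  have "(\<lambda>i. if i < Suc 0 then (if i = 0 then 1 else 0) else if i = Suc 0 then 0 else (if i - 1 = 0 then 1 else 0)) \<in> standard_simplex 1"
    (is "?e \<in> _")
  proof -
    have "?e = (\<lambda>j. if j = 0 then 1 else 0)" by auto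
    then show ?thesis by simp
  qed
  then show ?thesis
    by (auto simp: singular_face_def psimp_def vertex_def simplical_face_def standard_simplex_0)
qed

lemma full1_iff:
  "full X n F p 1 \<omega> \<longleftrightarrow> allowable X n F p 1 \<omega> \<and> allowable X n F p 0 (singular_face 1 0 \<omega>)
      \<and> allowable X n F p 0 (singular_face 1 1 \<omega>)"
  by (auto simp: One_nat_def le_Suc_eq)

lemma edge_psimp:
  assumes "full X n F p 1 (psimp g)"
  shows "gajer_edge X n F p (vertex (g 1)) (vertex (g 0))"
  unfolding gajer_edge_def using assms psimp_face0 psimp_face1 by metis

lemma conn_sym: "gajer_conn X n F p a b \<Longrightarrow> gajer_conn X n F p b a"
  unfolding gajer_conn_def
  by (induction rule: rtranclp.induct) (auto intro: converse_rtranclp_into_rtranclp)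

lemma class_eq:
  assumes "gajer_conn X n F p a b"
  shows "gajer_class X n F p a = gajer_class X n F p b"
proof -
  have "gajer_conn X n F p a c \<longleftrightarrow> gajer_conn X n F p b c" for c
    using assms conn_sym[OF assms] unfolding gajer_conn_def
    by (meson rtranclp_trans)
  then show ?thesis unfolding gajer_class_def by auto
qed

lemma edge_conn: "gajer_edge X n F p a b \<Longrightarrow> gajer_conn X n F p a b"
  unfolding gajer_conn_def by auto


lemma find_level:
  assumes FS: "filtered_space X n F" and x: "x \<in> F (n - 1)"
  obtains i where "0 \<le> i" "i < n" "x \<in> F i" "x \<notin> F (i - 1)"
proof -
  have n0: "0 \<le> n" using FS by (simp add: filtered_space_def)
  define P where "P k \<longleftrightarrow> x \<in> F (int k - 1)" for k
  have Pn: "P (nat n)" using x n0 by (simp add: P_def)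
  define k0 where "k0 = (LEAST k. P k)"
  have Pk0: "P k0" unfolding k0_def using Pn by (rule LeastI)
  have k0n: "k0 \<le> nat n" unfolding k0_def using Pn by (rule Least_le)
  have k00: "k0 \<noteq> 0" using Pk0 FS by (auto simp: P_def filtered_space_def)
  have notP: "\<not> P (k0 - 1)" unfolding k0_def
    by (rule not_less_Least) (use k00 k0_def in simp)
  show ?thesis
  proof (rule that[of "int k0 - 1"])
    show "0 \<le> int k0 - 1" using k00 by simp
    show "int k0 - 1 < n" using k0n k00 n0 by linarith
    show "x \<in> F (int k0 - 1)" using Pk0 by (simp add: P_def)
    show "x \<notin> F (int k0 - 1 - 1)" using notP k00 by (simp add: P_def of_nat_diff)
  qed
qed

lemma reg_path:
  fixes lt :: "'b itself" and X :: "'a topology"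
  assumes CS: "CS_set lt X n F" and x: "x \<in> topspace X"
  shows "\<exists>\<beta>. pathin X \<beta> \<and> \<beta> 0 = x \<and> \<beta> ` {0<..1} \<subseteq> topspace X - F (n - 1)"
proof (cases "x \<in> F (n - 1)")
  case False
  then show ?thesis
    by (intro exI[of _ "\<lambda>_. x"]) (use x in \<open>auto simp: pathin_def\<close>)
next
  case True
  have FS: "filtered_space X n F" using CS by (simp add: CS_set_def)
  obtain i where i: "0 \<le> i" "i < n" "x \<in> F i" "x \<notin> F (i - 1)"
    using find_level[OF FS True] by blast
  obtain U V and L :: "'b topology" and G and \<phi> :: "'a \<times> ('b \<times> real) option \<Rightarrow> 'a" where
    U: "openin (subtopology X (F i - F (i - 1))) U" "x \<in> U" and
    V: "openin X V" "x \<in> V" and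
    L: "filtered_space L (n - i - 1) G" and
    SH: "stratified_homeomorphism
             (prod_topology (subtopology X U) (cone_top L)) n (\<lambda>k. U \<times> cone_filt G (k - i))
             (subtopology X V) n (\<lambda>k. V \<inter> F k) \<phi>" and
    apex: "\<forall>u\<in>U. \<phi> (u, None) = u" and
    filt: "\<forall>j. -1 \<le> j \<and> j \<le> n - i - 1 \<longrightarrow>
              \<phi> ` (U \<times> cone_filt G (j + 1)) = V \<inter> F (i + j + 1)"
  proof -
    have A: "\<forall>i x. 0 \<le> i \<and> i < n \<and> x \<in> F i - F (i - 1) \<longrightarrow>
        (\<exists>U V (L :: 'b topology) G (\<phi> :: 'a \<times> ('b \<times> real) option \<Rightarrow> 'a).
           openin (subtopology X (F i - F (i - 1))) U \<and> x \<in> U \<and>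
           openin X V \<and> x \<in> V \<and>
           filtered_space L (n - i - 1) G \<and> compact_space L \<and>
           stratified_homeomorphism
             (prod_topology (subtopology X U) (cone_top L)) n (\<lambda>k. U \<times> cone_filt G (k - i))
             (subtopology X V) n (\<lambda>k. V \<inter> F k) \<phi> \<and>
           (\<forall>u\<in>U. \<phi> (u, None) = u) \<and>
           (\<forall>j. -1 \<le> j \<and> j \<le> n - i - 1 \<longrightarrow>
              \<phi> ` (U \<times> cone_filt G (j + 1)) = V \<inter> F (i + j + 1)))"
      using CS unfolding CS_set_def by (elim conjE)
    have "0 \<le> i \<and> i < n \<and> x \<in> F i - F (i - 1)" using i by simp
    from A[rule_format, OF this] show ?thesis by (elim exE conjE) (rule that; assumption)
  qed
  obtain \<psi> where HM: "homeomorphic_maps (prod_topology (subtopology X U) (cone_top L)) (subtopology X V) \<phi> \<psi>"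
    using SH unfolding stratified_homeomorphism_def by blast
  define m where "m = n - i - 1"
  have m0: "0 \<le> m" using i unfolding m_def by simp
  have Lne: "topspace L \<noteq> {}" and Gm: "G m = topspace L" and Gne: "G (m - 1) \<noteq> G m"
    using L unfolding filtered_space_def m_def by auto
  have Gsub: "G (m - 1) \<subseteq> topspace L"
    using filt_top[OF L, of "m - 1"] m0 unfolding m_def by simp
  obtain l where l: "l \<in> topspace L" "l \<notin> G (m - 1)"
    using Gsub Gne Gm by blast
  have Usub: "U \<subseteq> topspace X" using openin_subset[OF U(1)] by auto
  have topU: "topspace (subtopology X U) = U" using Usub by auto
  have contphi: "continuous_map (prod_topology (subtopology X U) (cone_top L)) (subtopology X V) \<phi>"
    using HM unfolding homeomorphic_maps_def by blast
  have inv: "\<And>a. a \<in> topspace (prod_topology (subtopology X U) (cone_top L)) \<Longrightarrow> \<psi> (\<phi> a) = a"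
    using HM unfolding homeomorphic_maps_def by blast
  define \<beta> where "\<beta> = (\<lambda>s. \<phi> (x, cone_quot (l, s / 2)))"
  have c1: "continuous_map (top_of_set {0..1}) (cone_base L) (\<lambda>s::real. (l, s / 2))"
    unfolding cone_base_def
  proof (rule continuous_map_pairedI)
    show "continuous_map (top_of_set {0..1}) L (\<lambda>s::real. l)" using l by simp
    show "continuous_map (top_of_set {0..1}) (top_of_set {0..<1}) (\<lambda>s::real. s / 2)"
      by (auto intro!: continuous_intros)
  qed
  have c2: "continuous_map (top_of_set {0..1}) (prod_topology (subtopology X U) (cone_top L))
              (\<lambda>s::real. (x, cone_quot (l, s / 2)))"
  proof (rule continuous_map_pairedI)
    show "continuous_map (top_of_set {0..1}) (subtopology X U) (\<lambda>s::real. x)" using topU U by simp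
    show "continuous_map (top_of_set {0..1}) (cone_top L) (\<lambda>s::real. cone_quot (l, s / 2))"
      using continuous_map_compose[OF c1 continuous_cone_quot] by (simp add: o_def)
  qed
  have "continuous_map (top_of_set {0..1}) (subtopology X V) \<beta>"
    using continuous_map_compose[OF c2 contphi] by (simp add: o_def \<beta>_def)
  then have path: "pathin X \<beta>"
    unfolding pathin_def by (simp add: continuous_map_in_subtopology)
  have b0: "\<beta> 0 = x" using apex U by (simp add: \<beta>_def cone_quot_def)
  have breg: "\<beta> s \<in> topspace X - F (n - 1)" if s: "s \<in> {0<..1}" for s
  proof -
    have cq: "cone_quot (l, s / 2) = Some (l, s / 2)" using s by (simp add: cone_quot_def)
    have "(l, s / 2) \<in> topspace (cone_base L)" using s l by (simp add: topspace_cone_base)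
    then have "Some (l, s / 2) \<in> topspace (cone_top L)"
      unfolding topspace_cone_top using cq by force
    then have atop: "(x, Some (l, s / 2)) \<in> topspace (prod_topology (subtopology X U) (cone_top L))"
      using topU U by simp
    then have "\<phi> (x, Some (l, s / 2)) \<in> topspace (subtopology X V)"
      using contphi unfolding continuous_map_def by blast
    then have inX: "\<beta> s \<in> topspace X \<inter> V" by (simp add: \<beta>_def cq)
    have "\<beta> s \<notin> F (n - 1)"
    proof
      assume inF: "\<beta> s \<in> F (n - 1)"
      have "-1 \<le> m - 1 \<and> m - 1 \<le> n - i - 1" using m0 unfolding m_def by simp
      from filt[rule_format, OF this]
      have "\<phi> ` (U \<times> cone_filt G (m - 1 + 1)) = V \<inter> F (i + (m - 1) + 1)" .
      then have eqF: "\<phi> ` (U \<times> cone_filt G m) = V \<inter> F (n - 1)" unfolding m_def by simp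
      have "\<beta> s \<in> \<phi> ` (U \<times> cone_filt G m)" unfolding eqF using inF inX by blast
      then obtain b where b: "b \<in> U \<times> cone_filt G m" "\<phi> b = \<beta> s"
        by (elim imageE) (metis)
      obtain u c where bc: "b = (u, c)" "u \<in> U" "c \<in> cone_filt G m" using b(1) by auto
      have cfm: "cone_filt G m = insert None (Some ` (G (m - 1) \<times> {0<..<1}))"
        using m0 by (simp add: cone_filt_def)
      have "c \<in> topspace (cone_top L)"
      proof (cases "c = None")
        case True
        have "None = cone_quot (l, 0)" by (simp add: cone_quot_def)
        moreover have "(l, 0) \<in> topspace (cone_base L)" using l by (simp add: topspace_cone_base)
        ultimately show ?thesis using True unfolding topspace_cone_top by blast
      next
        case False
        then obtain l' t' where lt: "c = Some (l', t')" "l' \<in> G (m - 1)" "t' \<in> {0<..<1}"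
          using bc(3) cfm by auto
        then have "c = cone_quot (l', t')" by (simp add: cone_quot_def)
        moreover have "(l', t') \<in> topspace (cone_base L)" using lt Gsub by (auto simp: topspace_cone_base)
        ultimately show ?thesis unfolding topspace_cone_top by blast
      qed
      then have btop: "b \<in> topspace (prod_topology (subtopology X U) (cone_top L))"
        using bc topU by simp
      have pb: "\<phi> b = \<phi> (x, Some (l, s / 2))" using b(2) by (simp add: \<beta>_def cq)
      have "b = (x, Some (l, s / 2))"
        using inv[OF btop] inv[OF atop] pb by metis
      then have "Some (l, s / 2) \<in> cone_filt G m" using bc by simp
      then show False using cfm l(2) by auto
    qed
    then show ?thesis using inX by blast
  qed
  show ?thesis using path b0 breg by blast
qed


lemma reg_class:
  assumes FS: "filtered_space X n F"
    and g: "pathin (subtopology X (topspace X - F (n - 1))) g"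
  shows "gajer_class X n F p (vertex (g 1)) = gajer_class X n F p (vertex (g 0))"
proof -
  have gX: "pathin X g" and gR: "\<And>s. s \<in> {0..1} \<Longrightarrow> g s \<in> topspace X - F (n - 1)"
    using g by (auto simp: pathin_subtopology)
  have "full X n F p 1 (psimp g)"
    unfolding full1_iff psimp_face0 psimp_face1
  proof (intro conjI)
    show "allowable X n F p 1 (psimp g)"
    proof (rule allowable_reg[OF FS psimp_simplex[OF gX]])
      fix t :: "nat \<Rightarrow> real" assume t: "t \<in> standard_simplex 1"
      then have "t 0 \<in> {0..1}" by (simp add: standard_simplex_def)
      then show "psimp g t \<notin> F (n - 1)" using gR t by (simp add: psimp_def)
    qed
    show "allowable X n F p 0 (vertex (g 0))"
      using gR[of 0] by (intro vertex_regular_allowable[OF FS]) auto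
    show "allowable X n F p 0 (vertex (g 1))"
      using gR[of 1] by (intro vertex_regular_allowable[OF FS]) auto
  qed
  from class_eq[OF edge_conn[OF edge_psimp[OF this]]] show ?thesis .
qed

lemma same_component_path:
  assumes "C \<in> path_components_of Z" "a \<in> C" "b \<in> C"
  shows "path_component_of Z a b"
proof -
  obtain z where Cz: "C = Collect (path_component_of Z z)"
    using assms(1) unfolding path_components_of_def by blast
  have za: "path_component_of Z z a" using assms(2) Cz by simp
  have zb: "path_component_of Z z b" using assms(3) Cz by simp
  show ?thesis by (rule path_component_of_trans[OF path_component_of_sym[OF za] zb])
qed

lemma vertex_eq:
  assumes "singular_simplex 0 X a"
  shows "a = vertex (a (\<lambda>j. if j = 0 then 1 else 0))"
proof (rule ext)
  fix t
  show "a t = vertex (a (\<lambda>j. if j = 0 then 1 else 0)) t"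
  proof (cases "t \<in> standard_simplex 0")
    case True
    then have "t = (\<lambda>j. if j = 0 then 1 else 0)" by (simp add: standard_simplex_0)
    moreover have "(\<lambda>j. if j = 0 then (1::real) else 0) \<in> standard_simplex 0" by simp
    ultimately show ?thesis unfolding vertex_def restrict_apply by simp
  next
    case False
    have ext: "a \<in> extensional (standard_simplex 0)" using assms by (simp add: singular_simplex_def)
    have "a t = undefined" by (rule extensional_arb[OF ext False])
    then show ?thesis using False unfolding vertex_def by simp
  qed
qed

lemma e1_unique:
  assumes "t \<in> standard_simplex 1" "t 0 = 0"
  shows "t = (\<lambda>j. if j = 1 then 1 else 0)"
proof (rule ext)
  fix j
  have s: "t 0 + t 1 = 1" and z: "\<And>i. i > 1 \<Longrightarrow> t i = 0"
    using assms(1) by (auto simp: standard_simplex_def)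
  show "t j = (if j = 1 then 1 else 0)"
  proof -
    consider "j = 0" | "j = 1" | "j > 1" by linarith
    then show ?thesis using s z assms(2) by cases auto
  qed
qed

theorem mainTheorem16:
  fixes X :: "'a topology" and n :: int and F :: "int \<Rightarrow> 'a set"
    and p :: "'a set \<Rightarrow> ereal" and link_type :: "'b itself"
  assumes "CS_set link_type X n F"
    and "perversity X n F p"
  shows "(\<forall>x\<in>topspace X. \<exists>\<beta>. pathin X \<beta> \<and> \<beta> 0 = x \<and> \<beta> ` {0<..1} \<subseteq> topspace X - F (n - 1))
       \<and> (\<forall>C\<in>regular_pi0 X n F. \<forall>y\<in>C. pi0_map X n F p C = gajer_class X n F p (vertex y))
       \<and> pi0_map X n F p ` regular_pi0 X n F = gajer_pi0 X n F p"
proof -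
  have FS: "filtered_space X n F" using assms(1) by (simp add: CS_set_def)
  let ?R = "topspace X - F (n - 1)"
  let ?Z = "subtopology X ?R"
  have P1: "\<forall>x\<in>topspace X. \<exists>\<beta>. pathin X \<beta> \<and> \<beta> 0 = x \<and> \<beta> ` {0<..1} \<subseteq> ?R"
    using reg_path[OF assms(1)] by blast
  have P2: "pi0_map X n F p C = gajer_class X n F p (vertex y)"
    if C: "C \<in> regular_pi0 X n F" and y: "y \<in> C" for C y
  proof -
    have C': "C \<in> path_components_of ?Z" using C by (simp add: regular_pi0_def)
    have y0: "(SOME y. y \<in> C) \<in> C" using y by (rule someI)
    obtain g where g: "pathin ?Z g" "g 0 = (SOME y. y \<in> C)" "g 1 = y"
      using same_component_path[OF C' y0 y] unfolding path_component_of_def by blast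
    show ?thesis
      using reg_class[OF FS g(1), of p] g(2,3) by (simp add: pi0_map_def)
  qed
  have P3a: "pi0_map X n F p ` regular_pi0 X n F \<subseteq> gajer_pi0 X n F p"
  proof
    fix D assume "D \<in> pi0_map X n F p ` regular_pi0 X n F"
    then obtain C where C: "C \<in> regular_pi0 X n F" and D: "D = pi0_map X n F p C" by blast
    have C': "C \<in> path_components_of ?Z" using C by (simp add: regular_pi0_def)
    have "C \<noteq> {}" using C' by (rule nonempty_path_components_of)
    then have y0: "(SOME y. y \<in> C) \<in> C" by (simp add: some_in_eq)
    have "C \<subseteq> ?R" using path_components_of_subset[OF C'] by simp
    then have "full X n F p 0 (vertex (SOME y. y \<in> C))"
      using y0 vertex_regular_allowable[OF FS] by auto
    then show "D \<in> gajer_pi0 X n F p"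
      unfolding D pi0_map_def gajer_pi0_def by blast
  qed
  have P3b: "gajer_pi0 X n F p \<subseteq> pi0_map X n F p ` regular_pi0 X n F"
  proof
    fix D assume "D \<in> gajer_pi0 X n F p"
    then obtain a where a: "full X n F p 0 a" and D: "D = gajer_class X n F p a"
      unfolding gajer_pi0_def by blast
    let ?e0 = "(\<lambda>j. if j = 0 then 1 else 0) :: nat \<Rightarrow> real"
    let ?e1 = "(\<lambda>j. if j = 1 then 1 else 0) :: nat \<Rightarrow> real"
    have aa: "allowable X n F p 0 a" using a by simp
    then have sa: "singular_simplex 0 X a" by (simp add: allowable_def)
    define x where "x = a ?e0"
    have ax: "a = vertex x" unfolding x_def by (rule vertex_eq[OF sa])
    have xX: "x \<in> topspace X"
      using sa unfolding singular_simplex_def continuous_map_def x_def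
      by (auto simp: standard_simplex_0)
    obtain \<beta> where \<beta>: "pathin X \<beta>" "\<beta> 0 = x" "\<beta> ` {0<..1} \<subseteq> ?R"
      using P1 xX by blast
    have full\<omega>: "full X n F p 1 (psimp \<beta>)"
      unfolding full1_iff psimp_face0 psimp_face1
    proof (intro conjI)
      show "allowable X n F p 0 (vertex (\<beta> 0))" using aa ax \<beta>(2) by simp
      have "(1::real) \<in> {0<..1}" by simp
      then have "\<beta> 1 \<in> ?R" using \<beta>(3) by blast
      then show "allowable X n F p 0 (vertex (\<beta> 1))"
        by (intro vertex_regular_allowable[OF FS]) auto
      show "allowable X n F p 1 (psimp \<beta>)"
        unfolding allowable_def
      proof (intro conjI ballI impI psimp_simplex[OF \<beta>(1)])
        fix S assume S: "S \<in> strata X n F" and c: "0 < codim X n F S"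
        have SF: "S \<subseteq> F (n - 1)" using sing_stratum[OF FS S c] .
        let ?A = "{t \<in> standard_simplex 1. psimp \<beta> t \<in> S}"
        have Asub: "?A \<subseteq> {?e1}"
        proof
          fix t assume t: "t \<in> ?A"
          have t01: "t 0 \<in> {0..1}" using t by (simp add: standard_simplex_def)
          have "t 0 = 0"
          proof (rule ccontr)
            assume "t 0 \<noteq> 0"
            then have "t 0 \<in> {0<..1}" using t01 by auto
            then have "\<beta> (t 0) \<in> \<beta> ` {0<..1}" by (rule imageI)
            then have "\<beta> (t 0) \<notin> F (n - 1)" using \<beta>(3) by blast
            moreover have "\<beta> (t 0) \<in> S" using t by (auto simp: psimp_def)
            ultimately show False using SF by blast
          qed
          then show "t \<in> {?e1}" using e1_unique t by auto
        qed
        show "polydim 1 ?A \<le> ereal (of_int (int 1 - codim X n F S)) + p S"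
        proof (cases "?A = {}")
          case True then show ?thesis by (simp add: polydim_def)
        next
          case False
          then have Aeq: "?A = {?e1}" using Asub by blast
          have e1s: "?e1 \<in> standard_simplex 1" by (rule basis_in_standard_simplex[THEN iffD2]) simp
          have "?e1 \<in> ?A" using Aeq by blast
          then have "x \<in> S" using \<beta>(2) by (auto simp: psimp_def)
          then have A0: "{t \<in> standard_simplex 0. a t \<in> S} = {?e0}"
            using ax by (auto simp: standard_simplex_0 vertex_def)
          have "polydim 0 {t \<in> standard_simplex 0. a t \<in> S} \<le> ereal (of_int (int 0 - codim X n F S)) + p S"
            using aa S c unfolding allowable_def by blast
          then have i0: "0 \<le> ereal (of_int (int 0 - codim X n F S)) + p S"
            unfolding A0 using polydim_single[of ?e0 0] by (simp add: standard_simplex_0)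
          have "ereal (of_int (int 0 - codim X n F S)) + p S \<le> ereal (of_int (int 1 - codim X n F S)) + p S"
            by (rule add_mono) auto
          then show ?thesis unfolding Aeq using polydim_single[OF e1s] i0 by simp
        qed
      qed
    qed
    have "gajer_class X n F p (vertex (\<beta> 1)) = gajer_class X n F p a"
      using class_eq[OF edge_conn[OF edge_psimp[OF full\<omega>]]] ax \<beta>(2) by simp
    moreover have b1: "\<beta> 1 \<in> ?R"
    proof -
      have "(1::real) \<in> {0<..1}" by simp
      then show ?thesis using \<beta>(3) by blast
    qed
    define C where "C = Collect (path_component_of ?Z (\<beta> 1))"
    have C: "C \<in> regular_pi0 X n F"
      unfolding C_def regular_pi0_def using b1
      by (simp add: path_component_in_path_components_of)
    have "\<beta> 1 \<in> C" unfolding C_def using b1 by (simp add: path_component_of_refl)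
    then have "pi0_map X n F p C = gajer_class X n F p (vertex (\<beta> 1))" using P2 C by blast
    ultimately show "D \<in> pi0_map X n F p ` regular_pi0 X n F"
      using C D by auto
  qed
  show ?thesis using P1 P2 P3a P3b by blast
qed

end
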